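(* Let $\mathbb{R}^m$ be endowed with a norm $\|\cdot\|$. Let $\bar A\in\mathbb{R}^{(m+1)\times n}$ have at least two different columns and let $v\in\mathbb{R}^m$. Then for all $\bar u\in F(v)$ and all $x\in\Delta_{n-1}$, \[ \min\{\|x-z\|_1: z\in\Delta_{n-1},\ \bar Az=\bar u\}\le\frac{2\|\bar Ax-\bar u\|_v}{\Phi_v(\bar A)}. \]
   Context: $\Delta_{n-1}=\{x\in\mathbb{R}^n_+:\sum_ix_i=1\}$. A matrix is identified with the set of its columns; $\mathrm{conv}(\bar A)=\{\bar Ax:x\in\Delta_{n-1}\}$. For $\bar w=(w,w_{m+1})\in\mathbb{R}^{m+1}$, $\|\bar w\|_v=\sqrt{\|w\|^2+|\langle v,w\rangle+w_{m+1}|}$; for nonempty $F,G\subseteq\mathbb{R}^{m+1}$, $\mathrm{dist}_v(F,G)=\min_{\bar w\in F,\bar w'\in G}\|\bar w-\bar w'\|_v$. $F(v)=\operatorname{Argmin}_{\bar w\in\mathrm{conv}(\bar A)}\langle(v,1),\bar w\rangle$, a face of $\mathrm{conv}(\bar A)$. The local facial distance is $\Phi_v(\bar A)=\min\{\mathrm{dist}_v(G,\mathrm{conv}(\bar A\setminus G)):G\text{ a face of }F(v),\ \emptyset\ne G\ne\mathrm{conv}(\bar A)\}$, where $\bar A\setminus G$ denotes the columns of $\bar A$ not in $G$. *)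

theory Defs
  imports "HOL-Analysis.Analysis"
begin

definition is_norm :: "('a::real_vector \<Rightarrow> real) \<Rightarrow> bool" where
  "is_norm N \<longleftrightarrow> (\<forall>x. 0 \<le> N x) \<and> (\<forall>x. N x = 0 \<longleftrightarrow> x = 0)
     \<and> (\<forall>c x. N (c *\<^sub>R x) = \<bar>c\<bar> * N x) \<and> (\<forall>x y. N (x + y) \<le> N x + N y)"

definition std_simplex :: "('n::finite \<Rightarrow> real) set" where
  "std_simplex = {x. (\<forall>i. 0 \<le> x i) \<and> sum x UNIV = 1}"

text \<open>Matrix with columns A j in R^{m+1} = R^m x R, times vector x.\<close>
definition matvec :: "('n::finite \<Rightarrow> (real^'m::finite) \<times> real) \<Rightarrow> ('n \<Rightarrow> real) \<Rightarrow> (real^'m::finite) \<times> real" where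
  "matvec A x = (\<Sum>i\<in>UNIV. x i *\<^sub>R A i)"

definition conv_mat :: "('n::finite \<Rightarrow> (real^'m::finite) \<times> real) \<Rightarrow> ((real^'m::finite) \<times> real) set" where
  "conv_mat A = convex hull (range A)"

definition normv :: "(real^'m::finite \<Rightarrow> real) \<Rightarrow> real^'m \<Rightarrow> (real^'m::finite) \<times> real \<Rightarrow> real" where
  "normv N v wb = sqrt ((N (fst wb))\<^sup>2 + \<bar>v \<bullet> fst wb + snd wb\<bar>)"

definition dist_v :: "(real^'m::finite \<Rightarrow> real) \<Rightarrow> real^'m \<Rightarrow> ((real^'m::finite) \<times> real) set \<Rightarrow> ((real^'m::finite) \<times> real) set \<Rightarrow> real" where
  "dist_v N v F G = Inf {normv N v (p - q) | p q. p \<in> F \<and> q \<in> G}"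

definition Fv :: "('n::finite \<Rightarrow> (real^'m::finite) \<times> real) \<Rightarrow> real^'m \<Rightarrow> ((real^'m::finite) \<times> real) set" where
  "Fv A v = {w \<in> conv_mat A. \<forall>w'\<in>conv_mat A. (v, 1) \<bullet> w \<le> (v, 1) \<bullet> w'}"

definition Phi :: "(real^'m::finite \<Rightarrow> real) \<Rightarrow> real^'m \<Rightarrow> ('n::finite \<Rightarrow> (real^'m::finite) \<times> real) \<Rightarrow> real" where
  "Phi N v A = Inf {dist_v N v G (convex hull (A ` {j. A j \<notin> G})) | G.
      G face_of Fv A v \<and> G \<noteq> {} \<and> G \<noteq> conv_mat A}"

end

theory Submission
  imports Defs
begin

lemma matvec_lin: "matvec A (\<lambda>i. a * x i + b * y i) = a *\<^sub>R matvec A x + b *\<^sub>R matvec A y"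
  by (simp add: matvec_def scaleR_add_left sum.distrib scaleR_sum_right)

lemma matvec_delta: "matvec A (\<lambda>j. if j = i then 1 else 0) = A i"
proof -
  have "matvec A (\<lambda>j. if j = i then 1 else 0) = (\<Sum>j\<in>UNIV. if j = i then A j else 0)"
    unfolding matvec_def by (rule sum.cong) auto
  then show ?thesis by simp
qed

lemma inner_matvec: "c \<bullet> matvec A r = (\<Sum>i\<in>UNIV. r i * (c \<bullet> A i))"
  by (simp add: matvec_def inner_sum_right)

lemma conv_mat_eq:
  fixes A :: "'n::finite \<Rightarrow> (real^'m::finite) \<times> real"
  shows "conv_mat A = matvec A ` std_simplex"
proof
  show "conv_mat A \<subseteq> matvec A ` std_simplex"
    unfolding conv_mat_def
  proof (rule hull_minimal)
    show "range A \<subseteq> matvec A ` std_simplex"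
    proof (rule image_subsetI)
      fix i :: 'n
      have "(\<lambda>j. if j = i then 1 else 0::real) \<in> std_simplex"
        by (simp add: std_simplex_def)
      then show "A i \<in> matvec A ` std_simplex" by (rule rev_image_eqI) (simp add: matvec_delta)
    qed
    show "convex (matvec A ` std_simplex)"
    proof (rule convexI)
      fix x y :: "(real^'m) \<times> real" and a b :: real
      assume x: "x \<in> matvec A ` std_simplex" and y: "y \<in> matvec A ` std_simplex"
        and ab: "0 \<le> a" "0 \<le> b" "a + b = 1"
      obtain r where r: "r \<in> std_simplex" "x = matvec A r" using x by blast
      obtain s where s: "s \<in> std_simplex" "y = matvec A s" using y by blast
      have "(\<Sum>i\<in>UNIV. a * r i + b * s i) = a * sum r UNIV + b * sum s UNIV"
        by (simp add: sum.distrib sum_distrib_left)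
      then have "(\<lambda>i. a * r i + b * s i) \<in> std_simplex"
        using r s ab by (simp add: std_simplex_def)
      then show "a *\<^sub>R x + b *\<^sub>R y \<in> matvec A ` std_simplex"
        by (rule rev_image_eqI) (simp add: matvec_lin r s)
    qed
  qed
  show "matvec A ` std_simplex \<subseteq> conv_mat A"
  proof (rule image_subsetI)
    fix r :: "'n \<Rightarrow> real" assume "r \<in> std_simplex"
    then show "matvec A r \<in> conv_mat A"
      unfolding conv_mat_def matvec_def
      by (intro convex_sum) (auto simp: std_simplex_def intro: hull_inc)
  qed
qed

lemma isn_tri: "is_norm N \<Longrightarrow> N (x + y) \<le> N x + N y" by (simp add: is_norm_def)
lemma isn_scale: "is_norm N \<Longrightarrow> N (c *\<^sub>R x) = \<bar>c\<bar> * N x" by (simp add: is_norm_def)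
lemma isn_nonneg: "is_norm N \<Longrightarrow> 0 \<le> N x" by (simp add: is_norm_def)
lemma isn_zero: "is_norm N \<Longrightarrow> N x = 0 \<longleftrightarrow> x = 0" by (simp add: is_norm_def)

lemma norm_neg: "is_norm N \<Longrightarrow> N (- x) = N x"
  using isn_scale[of N "-1" x] by simp

lemma norm_sum_le: assumes "is_norm N" shows "N (sum f S) \<le> (\<Sum>i\<in>S. N (f i))"
proof (cases "finite S")
  case True then show ?thesis
  proof (induction rule: finite_induct)
    case empty then show ?case using isn_zero[OF assms, of 0] by simp
  next
    case (insert a F)
    have "N (sum f (insert a F)) = N (f a + sum f F)" using insert by simp
    also have "\<dots> \<le> N (f a) + N (sum f F)" using isn_tri[OF assms] by simp
    also have "\<dots> \<le> N (f a) + (\<Sum>i\<in>F. N (f i))" using insert by simp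
    finally show ?case using insert by simp
  qed
next
  case False then show ?thesis using isn_zero[OF assms, of 0] by simp
qed

lemma norm_bound:
  fixes N :: "real^'m \<Rightarrow> real"
  assumes "is_norm N"
  shows "N x \<le> (\<Sum>i\<in>UNIV. N (axis i 1)) * norm x"
proof -
  have "x = (\<Sum>i\<in>UNIV. x$i *\<^sub>R axis i 1)"
    using basis_expansion[of x] by (simp add: scalar_mult_eq_scaleR)
  then have "N x \<le> (\<Sum>i\<in>UNIV. N (x$i *\<^sub>R axis i 1))"
    using norm_sum_le[OF assms, of "\<lambda>i. x$i *\<^sub>R axis i 1" UNIV] by simp
  also have "\<dots> = (\<Sum>i\<in>UNIV. \<bar>x$i\<bar> * N (axis i 1))"
    using isn_scale[OF assms] by simp
  also have "\<dots> \<le> (\<Sum>i\<in>UNIV. norm x * N (axis i 1))"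
    by (rule sum_mono, rule mult_right_mono) (simp_all add: isn_nonneg[OF assms] component_le_norm_cart)
  finally show ?thesis by (simp add: sum_distrib_left mult.commute)
qed

lemma norm_cont:
  fixes N :: "real^'m \<Rightarrow> real"
  assumes "is_norm N"
  shows "continuous_on S N"
proof (rule lipschitz_on_continuous_on)
  let ?C = "(\<Sum>i\<in>UNIV. N (axis i (1::real))) :: real"
  show "?C-lipschitz_on S N"
  proof (rule lipschitz_onI)
    fix x y
    have "N x \<le> N (x - y) + N y" using isn_tri[OF assms, of "x - y" y] by simp
    moreover have "N y \<le> N (y - x) + N x" using isn_tri[OF assms, of "y - x" x] by simp
    moreover have "N (y - x) = N (x - y)" using norm_neg[OF assms, of "x - y"] by simp
    moreover have "N (x - y) \<le> ?C * norm (x - y)" by (rule norm_bound[OF assms])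
    ultimately show "dist (N x) (N y) \<le> ?C * dist x y"
      by (simp add: dist_real_def dist_norm abs_le_iff)
    show "0 \<le> ?C" by (simp add: isn_nonneg[OF assms] sum_nonneg)
  qed
qed


lemma normv_nonneg: "0 \<le> normv N v w"
  unfolding normv_def by simp

lemma normv_zero: "is_norm N \<Longrightarrow> normv N v 0 = 0"
  unfolding normv_def using isn_zero[of N 0] by simp

lemma normv_neg: "is_norm N \<Longrightarrow> normv N v (- w) = normv N v w"
proof -
  assume n: "is_norm N"
  have "\<bar>v \<bullet> fst (- w) + snd (- w)\<bar> = \<bar>v \<bullet> fst w + snd w\<bar>"
    by (simp add: inner_minus_right abs_minus_commute)
  then show ?thesis unfolding normv_def using norm_neg[OF n, of "fst w"] by simp
qed

lemma normv_pos: assumes n: "is_norm N" and w: "w \<noteq> 0" shows "0 < normv N v w"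
proof (cases "fst w = 0")
  case True
  then have "snd w \<noteq> 0" using w by (simp add: prod_eq_iff)
  then have "0 < \<bar>v \<bullet> fst w + snd w\<bar>" using True by simp
  then show ?thesis unfolding normv_def
    by (intro real_sqrt_gt_zero) (simp add: add_nonneg_pos)
next
  case False
  then have "0 < N (fst w)" using isn_zero[OF n, of "fst w"] isn_nonneg[OF n, of "fst w"] by simp
  then show ?thesis unfolding normv_def
    by (intro real_sqrt_gt_zero) (simp add: add_pos_nonneg)
qed

lemma normv_scale:
  assumes n: "is_norm N" and t: "0 \<le> t" "t \<le> 1"
  shows "t * normv N v w \<le> normv N v (t *\<^sub>R w)"
proof -
  let ?a = "(N (fst w))\<^sup>2" and ?b = "\<bar>v \<bullet> fst w + snd w\<bar>"
  have e1: "(N (fst (t *\<^sub>R w)))\<^sup>2 = t\<^sup>2 * ?a"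
    using isn_scale[OF n, of t "fst w"] t by (simp add: power_mult_distrib)
  have "v \<bullet> fst (t *\<^sub>R w) + snd (t *\<^sub>R w) = t * (v \<bullet> fst w + snd w)"
    by (simp add: inner_scaleR_right algebra_simps)
  then have e2: "\<bar>v \<bullet> fst (t *\<^sub>R w) + snd (t *\<^sub>R w)\<bar> = t * ?b"
    using t by (simp add: abs_mult)
  have "t\<^sup>2 * ?b \<le> t * ?b"
  proof (rule mult_right_mono)
    have "t * t \<le> t * 1" using t by (intro mult_left_mono) simp_all
    then show "t\<^sup>2 \<le> t" by (simp add: power2_eq_square)
  qed simp
  then have "t\<^sup>2 * (?a + ?b) \<le> t\<^sup>2 * ?a + t * ?b" by (simp add: algebra_simps)
  then have "sqrt (t\<^sup>2 * (?a + ?b)) \<le> sqrt (t\<^sup>2 * ?a + t * ?b)" by (rule real_sqrt_le_mono)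
  moreover have "sqrt (t\<^sup>2 * (?a + ?b)) = t * sqrt (?a + ?b)"
    using t by (simp add: real_sqrt_mult)
  ultimately show ?thesis unfolding normv_def e1 e2 by simp
qed

lemma normv_cont:
  fixes N :: "real^'m::finite \<Rightarrow> real"
  assumes n: "is_norm N"
  shows "continuous_on S (normv N v)"
proof -
  have c: "continuous_on S (\<lambda>w. N (fst w))"
    by (rule continuous_on_compose2[OF norm_cont[OF n, of UNIV]]) (auto intro: continuous_intros)
  show ?thesis unfolding normv_def
    by (intro continuous_intros c)
qed

lemma dist_v_le:
  assumes "p \<in> F" "q \<in> G"
  shows "dist_v N v F G \<le> normv N v (p - q)"
  unfolding dist_v_def
proof (rule cInf_lower)
  show "normv N v (p - q) \<in> {normv N v (p - q) |p q. p \<in> F \<and> q \<in> G}" using assms by blast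
  show "bdd_below {normv N v (p - q) |p q. p \<in> F \<and> q \<in> G}"
  proof (rule bdd_belowI)
    fix x assume "x \<in> {normv N v (p - q) |p q. p \<in> F \<and> q \<in> G}"
    then show "0 \<le> x" using normv_nonneg by blast
  qed
qed

lemma dist_v_pos:
  fixes N :: "real^'m::finite \<Rightarrow> real"
  assumes n: "is_norm N" and F: "compact F" "F \<noteq> {}" and G: "compact G" "G \<noteq> {}"
    and d: "F \<inter> G = {}"
  shows "0 < dist_v N v F G"
proof -
  let ?D = "{p - q | p q. p \<in> F \<and> q \<in> G}"
  have cD: "compact ?D" by (rule compact_differences[OF F(1) G(1)])
  have neD: "?D \<noteq> {}" using F G by blast
  have "\<exists>x\<in>?D. \<forall>y\<in>?D. normv N v x \<le> normv N v y"
    by (rule continuous_attains_inf[OF cD neD normv_cont[OF n]])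
  then obtain w0 where w0: "w0 \<in> ?D" and min: "\<forall>y\<in>?D. normv N v w0 \<le> normv N v y" ..
  have eq: "{normv N v (p - q) | p q. p \<in> F \<and> q \<in> G} = normv N v ` ?D" by blast
  have "Inf (normv N v ` ?D) = normv N v w0"
  proof (rule cInf_eq_minimum)
    show "normv N v w0 \<in> normv N v ` ?D" using w0 by (rule imageI)
    show "\<And>x. x \<in> normv N v ` ?D \<Longrightarrow> normv N v w0 \<le> x" using min by blast
  qed
  moreover have "w0 \<noteq> 0"
  proof -
    from w0 obtain p0 q0 where pq: "w0 = p0 - q0" "p0 \<in> F" "q0 \<in> G" by blast
    have "p0 \<noteq> q0" using d pq(2,3) by blast
    then show ?thesis using pq(1) by simp
  qed
  ultimately show ?thesis unfolding dist_v_def eq using normv_pos[OF n] by simp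
qed


lemma polytope_conv: "polytope (conv_mat A)"
  unfolding polytope_def conv_mat_def by (intro exI[of _ "range A"]) simp

lemma convex_conv: "convex (conv_mat A)"
  unfolding conv_mat_def by simp

lemma Fv_eq:
  assumes u: "u \<in> Fv A v"
  shows "Fv A v = conv_mat A \<inter> {w. (v, 1) \<bullet> w = (v, 1) \<bullet> u}"
proof
  show "Fv A v \<subseteq> conv_mat A \<inter> {w. (v, 1) \<bullet> w = (v, 1) \<bullet> u}"
  proof
    fix w assume w: "w \<in> Fv A v"
    have "(v, 1) \<bullet> w \<le> (v, 1) \<bullet> u" using w u unfolding Fv_def by blast
    moreover have "(v, 1) \<bullet> u \<le> (v, 1) \<bullet> w" using w u unfolding Fv_def by blast
    ultimately show "w \<in> conv_mat A \<inter> {w. (v, 1) \<bullet> w = (v, 1) \<bullet> u}" using w unfolding Fv_def by simp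
  qed
  show "conv_mat A \<inter> {w. (v, 1) \<bullet> w = (v, 1) \<bullet> u} \<subseteq> Fv A v"
    using u unfolding Fv_def by auto
qed

lemma Fv_face:
  assumes u: "u \<in> Fv A v"
  shows "Fv A v face_of conv_mat A"
proof -
  have "(conv_mat A \<inter> {w. (v, 1) \<bullet> w = (v, 1) \<bullet> u}) face_of conv_mat A"
  proof (rule face_of_Int_supporting_hyperplane_ge[OF convex_conv])
    fix x assume "x \<in> conv_mat A"
    then show "(v, 1) \<bullet> u \<le> (v, 1) \<bullet> x" using u unfolding Fv_def by blast
  qed
  then show ?thesis using Fv_eq[OF u] by simp
qed

lemma face_pts:
  fixes S :: "'a::real_vector set"
  assumes G: "G face_of S" and S: "convex S" and P: "finite P" "P \<subseteq> S"
    and mu: "\<forall>y\<in>P. 0 \<le> mu y" "sum mu P = 1" and w: "(\<Sum>y\<in>P. mu y *\<^sub>R y) \<in> G"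
    and y: "y \<in> P" "0 < mu y"
  shows "y \<in> G"
proof -
  let ?w = "(\<Sum>y\<in>P. mu y *\<^sub>R y)"
  have sw: "?w = mu y *\<^sub>R y + (\<Sum>z\<in>P - {y}. mu z *\<^sub>R z)"
    using P(1) y(1) by (simp add: sum.remove)
  have sm: "sum mu (P - {y}) = 1 - mu y"
    using P(1) y(1) mu(2) by (simp add: sum.remove)
  show ?thesis
  proof (cases "mu y = 1")
    case True
    then have "sum mu (P - {y}) = 0" using sm by simp
    moreover have "\<forall>z\<in>P - {y}. 0 \<le> mu z" using mu(1) by blast
    ultimately have "\<forall>z\<in>P - {y}. mu z = 0" using P(1) sum_nonneg_eq_0_iff[of "P - {y}" mu] by blast
    then have "(\<Sum>z\<in>P - {y}. mu z *\<^sub>R z) = 0" by simp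
    then have "?w = y" using sw True by simp
    then show ?thesis using w by simp
  next
    case False
    have lt: "mu y < 1"
    proof -
      have "0 \<le> sum mu (P - {y})" using mu(1) by (intro sum_nonneg) auto
      then show ?thesis using sm False by simp
    qed
    define w' where "w' = (\<Sum>z\<in>P - {y}. (mu z / (1 - mu y)) *\<^sub>R z)"
    have w'S: "w' \<in> S" unfolding w'_def
    proof (rule convex_sum[OF _ S])
      show "finite (P - {y})" using P by simp
      show "(\<Sum>i\<in>P - {y}. mu i / (1 - mu y)) = 1"
        using sm lt by (simp add: sum_divide_distrib[symmetric])
      show "\<And>i. i \<in> P - {y} \<Longrightarrow> 0 \<le> mu i / (1 - mu y)" using mu(1) lt by simp
      show "\<And>i. i \<in> P - {y} \<Longrightarrow> i \<in> S" using P by blast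
    qed
    have "(1 - mu y) *\<^sub>R w' = (\<Sum>z\<in>P - {y}. mu z *\<^sub>R z)"
      unfolding w'_def scaleR_sum_right using lt by (intro sum.cong) simp_all
    then have we: "?w = (1 - mu y) *\<^sub>R w' + mu y *\<^sub>R y" using sw by simp
    show ?thesis
    proof (cases "w' = y")
      case True
      then have "?w = y" using we by (simp add: scaleR_left_distrib[symmetric])
      then show ?thesis using w by simp
    next
      case False
      have "?w \<in> open_segment w' y"
        unfolding in_segment(2) using False y(2) lt we by blast
      then show ?thesis using face_ofD[OF G _ w'S _ w] P y(1) by blast
    qed
  qed
qed

lemma face_disj:
  fixes A :: "'n::finite \<Rightarrow> (real^'m::finite) \<times> real"
  assumes G: "G face_of conv_mat A"
  shows "G \<inter> convex hull (A ` {j. A j \<notin> G}) = {}"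
proof (rule ccontr)
  assume "G \<inter> convex hull (A ` {j. A j \<notin> G}) \<noteq> {}"
  then obtain w where wG: "w \<in> G" and wH: "w \<in> convex hull (A ` {j. A j \<notin> G})" by blast
  let ?P = "A ` {j. A j \<notin> G}"
  have fP: "finite ?P" by simp
  obtain mu where mu: "\<forall>x\<in>?P. 0 \<le> mu x" "sum mu ?P = 1" "(\<Sum>x\<in>?P. mu x *\<^sub>R x) = w"
    using wH unfolding convex_hull_finite[OF fP] by blast
  have "\<exists>y\<in>?P. 0 < mu y"
  proof (rule ccontr)
    assume "\<not> (\<exists>y\<in>?P. 0 < mu y)"
    then have "\<forall>y\<in>?P. mu y = 0" using mu(1) by force
    then have "sum mu ?P = 0" by (rule sum.neutral)
    then show False using mu(2) by simp
  qed
  then obtain y where y: "y \<in> ?P" "0 < mu y" by blast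
  have PS: "?P \<subseteq> conv_mat A" unfolding conv_mat_def by (auto intro: hull_inc)
  have "y \<in> G" by (rule face_pts[OF G convex_conv fP PS mu(1,2) _ y]) (use mu(3) wG in simp)
  then show False using y(1) by blast
qed

lemma matvec_add: "matvec A (\<lambda>i. f i + g i) = matvec A f + matvec A g"
  by (simp add: matvec_def scaleR_add_left sum.distrib)

lemma matvec_diff: "matvec A (\<lambda>i. f i - g i) = matvec A f - matvec A g"
  by (simp add: matvec_def scaleR_diff_left sum_subtractf)

lemma matvec_cmul: "matvec A (\<lambda>i. c * f i) = c *\<^sub>R matvec A f"
  by (simp add: matvec_def scaleR_sum_right)

lemma exchange:
  fixes A :: "'n::finite \<Rightarrow> (real^'m::finite) \<times> real"
  assumes G0: "G0 face_of conv_mat A" and ri: "matvec A q \<in> rel_interior G0" and Ai: "A i \<in> G0"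
    and t: "0 < t" and M: "\<forall>j. 0 \<le> M j" "sum M UNIV = 1 - t"
    and P: "\<forall>j. 0 \<le> P j" "sum P UNIV = t" "0 < P i"
    and u: "matvec A M + t *\<^sub>R matvec A q = u"
  shows "\<exists>z'. z' \<in> std_simplex \<and> matvec A z' = u \<and> (\<Sum>j\<in>UNIV. \<bar>(M j + P j) - z' j\<bar>) < 2 * t"
proof -
  have cG: "convex G0" using G0 by (rule face_of_imp_convex)
  have "A i \<in> affine hull G0" using Ai by (rule hull_inc)
  then obtain mm where mm: "mm > 1" and pro: "\<forall>e. e > 1 \<and> e \<le> mm \<longrightarrow> (1 - e) *\<^sub>R A i + e *\<^sub>R matvec A q \<in> G0"
    using convex_rel_interior_if[OF cG ri] by blast
  define e where "e = min mm (1 + P i / t)"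
  have pit: "0 < P i / t" using P(3) t by simp
  have e1: "1 < e" using mm pit unfolding e_def by simp
  have e2: "e - 1 \<le> P i / t" unfolding e_def by simp
  define y where "y = (1 - e) *\<^sub>R A i + e *\<^sub>R matvec A q"
  have yG: "y \<in> G0" using pro e1 unfolding y_def e_def by simp
  have "y \<in> conv_mat A" using yG face_of_imp_subset[OF G0] by blast
  then obtain r where r: "r \<in> std_simplex" "matvec A r = y" unfolding conv_mat_eq by blast
  define d where "d = 1 - 1 / e"
  have d0: "0 < d" using e1 unfolding d_def by simp
  have d1: "d \<le> 1" using e1 unfolding d_def by simp
  have dle: "d \<le> P i / t"
  proof -
    have "1 - 1 / e \<le> e - 1"
    proof -
      have "e * (1 - 1/e) = e - 1" using e1 by (simp add: field_simps)
      also have "\<dots> \<le> e * (e - 1)" using e1 by (simp add: mult_le_cancel_right1)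
      finally show ?thesis using e1 by simp
    qed
    then show ?thesis using e2 unfolding d_def by simp
  qed
  have tdle: "t * d \<le> P i" using dle t by (simp add: field_simps)
  have aq: "matvec A q = (1 - d) *\<^sub>R y + d *\<^sub>R A i"
  proof -
    have "(1 - d) *\<^sub>R y = (1/e) *\<^sub>R y" unfolding d_def by simp
    also have "\<dots> = ((1 - e)/e) *\<^sub>R A i + matvec A q" unfolding y_def using e1
      by (simp add: scaleR_add_right scaleR_scaleR)
    finally show ?thesis unfolding d_def using e1 by (simp add: algebra_simps diff_divide_distrib)
  qed
  define dl where "dl = (\<lambda>j. if j = i then 1 else (0::real))"
  define z' where "z' = (\<lambda>j. M j + t * (1 - d) * r j + t * d * dl j)"
  have rS: "\<forall>j. 0 \<le> r j" "sum r UNIV = 1" using r(1) unfolding std_simplex_def by auto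
  have sdl: "sum dl UNIV = 1" unfolding dl_def by simp
  have z'S: "z' \<in> std_simplex"
  proof -
    have "\<forall>j. 0 \<le> z' j" unfolding z'_def dl_def using M(1) rS(1) t d0 d1 by simp
    moreover have "sum z' UNIV = 1"
    proof -
      have "sum z' UNIV = sum M UNIV + t * (1 - d) * sum r UNIV + t * d * sum dl UNIV"
        unfolding z'_def by (simp add: sum.distrib sum_distrib_left)
      then show ?thesis using M(2) rS(2) sdl by (simp add: algebra_simps)
    qed
    ultimately show ?thesis unfolding std_simplex_def by simp
  qed
  have z'A: "matvec A z' = u"
  proof -
    have "matvec A z' = matvec A M + (t * (1 - d)) *\<^sub>R matvec A r + (t * d) *\<^sub>R matvec A dl"
      unfolding z'_def by (simp add: matvec_add matvec_cmul mult.assoc)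
    also have "\<dots> = matvec A M + t *\<^sub>R matvec A q"
      unfolding aq r(2) dl_def matvec_delta by (simp add: scaleR_add_right scaleR_scaleR)
    finally show ?thesis using u by simp
  qed
  have est: "\<bar>(M j + P j) - z' j\<bar> \<le> (P j - t * d * dl j) + t * (1 - d) * r j" for j
  proof -
    have a: "0 \<le> P j - t * d * dl j" using tdle P(1) unfolding dl_def by simp
    have b: "0 \<le> t * (1 - d) * r j" using t d1 rS(1) by simp
    have "(M j + P j) - z' j = (P j - t * d * dl j) - t * (1 - d) * r j" unfolding z'_def by simp
    then show ?thesis using a b by simp
  qed
  have "(\<Sum>j\<in>UNIV. \<bar>(M j + P j) - z' j\<bar>) \<le> (\<Sum>j\<in>UNIV. (P j - t * d * dl j) + t * (1 - d) * r j)"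
    by (rule sum_mono) (rule est)
  also have "\<dots> = sum P UNIV - t * d * sum dl UNIV + t * (1 - d) * sum r UNIV"
    by (simp add: sum.distrib sum_subtractf sum_distrib_left)
  also have "\<dots> = 2 * t * (1 - d)" using P(2) sdl rS(2) by (simp add: algebra_simps)
  also have "\<dots> < 2 * t" using t d0 by simp
  finally show ?thesis using z'S z'A by blast
qed

lemma exists_min:
  fixes A :: "'n::finite \<Rightarrow> (real^'m::finite) \<times> real" and x :: "'n \<Rightarrow> real"
  assumes z0: "z0 \<in> std_simplex" "matvec A z0 = u"
  shows "\<exists>z. z \<in> std_simplex \<and> matvec A z = u \<and> (\<forall>z'. z' \<in> std_simplex \<and> matvec A z' = u \<longrightarrow>
            (\<Sum>i\<in>UNIV. \<bar>x i - z i\<bar>) \<le> (\<Sum>i\<in>UNIV. \<bar>x i - z' i\<bar>))"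
proof -
  define K where "K = {w :: real^'n. (\<forall>i. 0 \<le> w$i) \<and> (\<Sum>i\<in>UNIV. w$i) = 1 \<and> (\<Sum>i\<in>UNIV. w$i *\<^sub>R A i) = u}"
  have memK: "(\<chi> i. z i) \<in> K \<longleftrightarrow> z \<in> std_simplex \<and> matvec A z = u" for z
    unfolding K_def std_simplex_def matvec_def by simp
  have cl: "closed K" unfolding K_def
    by (intro closed_Collect_conj closed_Collect_all closed_Collect_le closed_Collect_eq continuous_intros)
  have bd: "bounded K" unfolding bounded_iff
  proof (intro exI ballI)
    fix w assume w: "w \<in> K"
    have "norm w \<le> (\<Sum>i\<in>UNIV. \<bar>w$i\<bar>)" by (rule norm_le_l1_cart)
    also have "\<dots> = (\<Sum>i\<in>UNIV. w$i)" using w unfolding K_def by simp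
    also have "\<dots> = 1" using w unfolding K_def by simp
    finally show "norm w \<le> 1" .
  qed
  have cK: "compact K" using cl bd by (simp add: compact_eq_bounded_closed)
  have neK: "K \<noteq> {}" using memK[of z0] z0 by blast
  have "\<exists>w\<in>K. \<forall>y\<in>K. (\<Sum>i\<in>UNIV. \<bar>x i - w$i\<bar>) \<le> (\<Sum>i\<in>UNIV. \<bar>x i - y$i\<bar>)"
    by (rule continuous_attains_inf[OF cK neK]) (intro continuous_intros)
  then obtain w where w: "w \<in> K" and wm: "\<forall>y\<in>K. (\<Sum>i\<in>UNIV. \<bar>x i - w$i\<bar>) \<le> (\<Sum>i\<in>UNIV. \<bar>x i - y$i\<bar>)" ..
  define z where "z = (\<lambda>i. w$i)"
  have wz: "w = (\<chi> i. z i)" unfolding z_def by simp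
  have "z \<in> std_simplex \<and> matvec A z = u" using w memK wz by simp
  moreover have "(\<Sum>i\<in>UNIV. \<bar>x i - z i\<bar>) \<le> (\<Sum>i\<in>UNIV. \<bar>x i - z' i\<bar>)"
    if "z' \<in> std_simplex \<and> matvec A z' = u" for z'
  proof -
    have "(\<chi> i. z' i) \<in> K" using memK that by simp
    then show ?thesis using wm unfolding z_def by force
  qed
  ultimately show ?thesis by blast
qed

lemma cols_out:
  fixes A :: "'n::finite \<Rightarrow> (real^'m::finite) \<times> real"
  assumes G: "G face_of Fv A v" "G \<noteq> conv_mat A" and u: "u \<in> Fv A v"
  shows "{j. A j \<notin> G} \<noteq> {}"
proof
  assume e: "{j. A j \<notin> G} = {}"
  have "conv_mat A \<subseteq> G" unfolding conv_mat_def
    by (rule hull_minimal) (use e face_of_imp_convex[OF G(1)] in auto)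
  moreover have "G \<subseteq> conv_mat A"
    using face_of_imp_subset[OF G(1)] face_of_imp_subset[OF Fv_face[OF u]] by blast
  ultimately show False using G(2) by blast
qed

lemma dist_pos_face:
  fixes A :: "'n::finite \<Rightarrow> (real^'m::finite) \<times> real"
  assumes n: "is_norm N" and G: "G face_of Fv A v" "G \<noteq> {}" "G \<noteq> conv_mat A" and u: "u \<in> Fv A v"
  shows "0 < dist_v N v G (convex hull (A ` {j. A j \<notin> G}))"
proof (rule dist_v_pos[OF n])
  have pF: "polytope (Fv A v)" by (rule face_of_polytope_polytope[OF polytope_conv Fv_face[OF u]])
  show "compact G" by (rule polytope_imp_compact[OF face_of_polytope_polytope[OF pF G(1)]])
  show "G \<noteq> {}" by (rule G(2))
  show "compact (convex hull (A ` {j. A j \<notin> G}))"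
    by (intro compact_convex_hull finite_imp_compact) simp
  show "convex hull (A ` {j. A j \<notin> G}) \<noteq> {}" using cols_out[OF G(1,3) u] by simp
  show "G \<inter> convex hull (A ` {j. A j \<notin> G}) = {}"
    by (rule face_disj[OF face_of_trans[OF G(1) Fv_face[OF u]]])
qed

lemma Phi_props:
  fixes A :: "'n::finite \<Rightarrow> (real^'m::finite) \<times> real"
  assumes n: "is_norm N" and G: "G face_of Fv A v" "G \<noteq> {}" "G \<noteq> conv_mat A" and u: "u \<in> Fv A v"
  shows "Phi N v A \<le> dist_v N v G (convex hull (A ` {j. A j \<notin> G}))" and "0 < Phi N v A"
proof -
  let ?S = "{dist_v N v G (convex hull (A ` {j. A j \<notin> G})) | G.
      G face_of Fv A v \<and> G \<noteq> {} \<and> G \<noteq> conv_mat A}"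
  have pF: "polytope (Fv A v)" by (rule face_of_polytope_polytope[OF polytope_conv Fv_face[OF u]])
  have "?S \<subseteq> (\<lambda>G. dist_v N v G (convex hull (A ` {j. A j \<notin> G}))) ` {G. G face_of Fv A v}" by blast
  moreover have "finite ((\<lambda>G. dist_v N v G (convex hull (A ` {j. A j \<notin> G}))) ` {G. G face_of Fv A v})"
    using finite_polytope_faces[OF pF] by (rule finite_imageI)
  ultimately have fin: "finite ?S" by (rule finite_subset)
  have mem: "dist_v N v G (convex hull (A ` {j. A j \<notin> G})) \<in> ?S" using G by blast
  have ne: "?S \<noteq> {}" using mem by blast
  have pos: "\<forall>y\<in>?S. 0 < y" using dist_pos_face[OF n _ _ _ u] by blast
  show "Phi N v A \<le> dist_v N v G (convex hull (A ` {j. A j \<notin> G}))"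
    unfolding Phi_def by (rule cInf_lower[OF mem]) (rule bdd_belowI[where m=0], use pos less_imp_le in blast)
  show "0 < Phi N v A" unfolding Phi_def using finite_less_Inf_iff[OF fin ne] pos by blast
qed

theorem lemma2:
  fixes N :: "real^'m \<Rightarrow> real" and v :: "real^'m"
    and A :: "'n::finite \<Rightarrow> (real^'m::finite) \<times> real"
    and u :: "(real^'m::finite) \<times> real" and x :: "'n \<Rightarrow> real"
  assumes "is_norm N"
    and "\<exists>i j. A i \<noteq> A j"
    and "u \<in> Fv A v"
    and "x \<in> std_simplex"
  shows "Inf {(\<Sum>i\<in>UNIV. \<bar>x i - z i\<bar>) | z. z \<in> std_simplex \<and> matvec A z = u}
           \<le> 2 * normv N v (matvec A x - u) / Phi N v A"
proof -
  have n: "is_norm N" using assms(1) .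
  have uF: "u \<in> Fv A v" using assms(3) .
  have xS: "\<forall>i. 0 \<le> x i" "sum x UNIV = 1" using assms(4) unfolding std_simplex_def by auto
  let ?c = "(v, 1::real)"
  let ?m = "?c \<bullet> u"
  let ?L = "{(\<Sum>i\<in>UNIV. \<bar>x i - z i\<bar>) | z. z \<in> std_simplex \<and> matvec A z = u}"
  have cge: "\<And>w. w \<in> conv_mat A \<Longrightarrow> ?m \<le> ?c \<bullet> w" using uF unfolding Fv_def by blast
  have uconv: "u \<in> conv_mat A" using uF unfolding Fv_def by blast
  then obtain z0 where z0: "z0 \<in> std_simplex" "matvec A z0 = u" unfolding conv_mat_eq by blast
  obtain z where zS: "z \<in> std_simplex" and zA: "matvec A z = u"
    and zmin: "\<forall>z'. z' \<in> std_simplex \<and> matvec A z' = u \<longrightarrow>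
            (\<Sum>i\<in>UNIV. \<bar>x i - z i\<bar>) \<le> (\<Sum>i\<in>UNIV. \<bar>x i - z' i\<bar>)"
    using exists_min[OF z0, of x] by blast
  have zS': "\<forall>i. 0 \<le> z i" "sum z UNIV = 1" using zS unfolding std_simplex_def by auto
  define P where "P = (\<lambda>i. max (x i - z i) 0)"
  define Q where "Q = (\<lambda>i. max (z i - x i) 0)"
  define M where "M = (\<lambda>i. min (x i) (z i))"
  define t where "t = sum P UNIV"
  have xPM: "x i = M i + P i" for i unfolding M_def P_def by simp
  have zQM: "z i = M i + Q i" for i unfolding M_def Q_def by simp
  have dPQ: "\<bar>x i - z i\<bar> = P i + Q i" for i unfolding P_def Q_def by simp
  have P0: "\<forall>i. 0 \<le> P i" unfolding P_def by simp
  have Q0: "\<forall>i. 0 \<le> Q i" unfolding Q_def by simp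
  have M0: "\<forall>i. 0 \<le> M i" unfolding M_def using xS(1) zS'(1) by simp
  have sx: "sum x UNIV = sum M UNIV + sum P UNIV" by (simp add: xPM sum.distrib)
  have sz: "sum z UNIV = sum M UNIV + sum Q UNIV" by (simp add: zQM sum.distrib)
  have sQ: "sum Q UNIV = t" using sx sz xS(2) zS'(2) unfolding t_def by simp
  have sM: "sum M UNIV = 1 - t" using sx xS(2) unfolding t_def by simp
  have t0: "0 \<le> t" unfolding t_def using P0 by (simp add: sum_nonneg)
  have dz: "(\<Sum>i\<in>UNIV. \<bar>x i - z i\<bar>) = 2 * t"
    by (simp add: dPQ sum.distrib sQ t_def)
  have bddL: "bdd_below ?L"
    by (rule bdd_belowI[where m=0]) auto
  have L2t: "Inf ?L \<le> 2 * t"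
  proof -
    have "2 * t \<in> ?L" using zS zA dz by force
    then show ?thesis by (rule cInf_lower) (rule bddL)
  qed
  show ?thesis
  proof (cases "t = 0")
    case True
    then have "\<forall>i. P i = 0" using P0 unfolding t_def by (simp add: sum_nonneg_eq_0_iff)
    moreover have "\<forall>i. Q i = 0" using True sQ Q0 by (simp add: sum_nonneg_eq_0_iff)
    ultimately have "x = z" using xPM zQM by (intro ext) simp
    then have "matvec A x - u = 0" using zA by simp
    then have h: "2 * normv N v (matvec A x - u) / Phi N v A = 0" using normv_zero[OF n] by simp
    show ?thesis unfolding h using L2t True by simp
  next
    case False
    then have tp: "0 < t" using t0 by simp
    define p where "p = (\<lambda>i. P i / t)"
    define q where "q = (\<lambda>i. Q i / t)"
    have Pp: "P i = t * p i" for i unfolding p_def using tp by simp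
    have Qq: "Q i = t * q i" for i unfolding q_def using tp by simp
    have qS: "q \<in> std_simplex" unfolding std_simplex_def q_def
      using Q0 sQ tp by (simp add: sum_divide_distrib[symmetric])
    have pS0: "\<forall>i. 0 \<le> p i" unfolding p_def using P0 tp by simp
    have sp: "sum p UNIV = 1" unfolding p_def using tp by (simp add: sum_divide_distrib[symmetric] t_def)
    have Ax: "matvec A x - u = t *\<^sub>R (matvec A p - matvec A q)"
    proof -
      have "matvec A x - u = matvec A (\<lambda>i. x i - z i)" using zA by (simp add: matvec_diff)
      also have "(\<lambda>i. x i - z i) = (\<lambda>i. t * p i - t * q i)"
        by (rule ext) (simp add: xPM zQM Pp[symmetric] Qq[symmetric])
      also have "matvec A \<dots> = t *\<^sub>R (matvec A p - matvec A q)"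
        by (simp add: matvec_diff matvec_cmul scaleR_diff_right)
      finally show ?thesis .
    qed
    have uMq: "matvec A M + t *\<^sub>R matvec A q = u"
    proof -
      have "(\<lambda>i. M i + t * q i) = z" by (rule ext) (simp add: zQM Qq)
      then have "u = matvec A (\<lambda>i. M i + t * q i)" using zA by simp
      then show ?thesis by (simp add: matvec_add matvec_cmul)
    qed
    have qconv: "matvec A q \<in> conv_mat A" unfolding conv_mat_eq using qS by blast
    have AiC: "A i \<in> conv_mat A" for i unfolding conv_mat_def by (rule hull_inc) simp
    have qF: "matvec A q \<in> Fv A v"
    proof -
      have "?c \<bullet> matvec A M = (\<Sum>i\<in>UNIV. M i * (?c \<bullet> A i))" by (rule inner_matvec)
      also have "\<dots> \<ge> (\<Sum>i\<in>UNIV. M i * ?m)"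
        by (rule sum_mono, rule mult_left_mono) (use M0 cge AiC in auto)
      finally have h1: "(1 - t) * ?m \<le> ?c \<bullet> matvec A M" using sM by (simp add: sum_distrib_right[symmetric])
      have h2: "?m = ?c \<bullet> matvec A M + t * (?c \<bullet> matvec A q)"
        using uMq by (metis inner_add_right inner_scaleR_right)
      have "t * (?c \<bullet> matvec A q) \<le> t * ?m" using h1 h2 by (simp add: algebra_simps)
      then have "?c \<bullet> matvec A q \<le> ?m" using tp by simp
      then show ?thesis unfolding Fv_def using qconv cge by force
    qed
    have FvF: "Fv A v face_of conv_mat A" by (rule Fv_face[OF uF])
    have pF: "polytope (Fv A v)" by (rule face_of_polytope_polytope[OF polytope_conv FvF])
    define Fam where "Fam = {G. G face_of Fv A v \<and> matvec A q \<in> G}"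
    define G0 where "G0 = \<Inter> Fam"
    have FvFam: "Fv A v \<in> Fam" unfolding Fam_def
      using qF face_of_refl[OF face_of_imp_convex[OF FvF]] by simp
    have G0F: "G0 face_of Fv A v" unfolding G0_def
      by (rule face_of_Inter) (use FvFam Fam_def in auto)
    have qG0: "matvec A q \<in> G0" unfolding G0_def Fam_def by blast
    have pG0: "polytope G0" by (rule face_of_polytope_polytope[OF pF G0F])
    have clG0: "closed G0" using polytope_imp_compact[OF pG0] by (rule compact_imp_closed)
    have ri: "matvec A q \<in> rel_interior G0"
    proof (rule ccontr)
      assume "matvec A q \<notin> rel_interior G0"
      then have "matvec A q \<in> rel_frontier G0" unfolding rel_frontier_def using qG0 clG0 by (simp add: closure_closed)
      then obtain F where F: "F face_of G0" "F \<noteq> G0" "matvec A q \<in> F"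
        unfolding rel_frontier_of_polyhedron_alt[OF polytope_imp_polyhedron[OF pG0]] by blast
      have "F \<in> Fam" unfolding Fam_def using face_of_trans[OF F(1) G0F] F(3) by simp
      then have "G0 \<subseteq> F" unfolding G0_def by blast
      then show False using face_of_imp_subset[OF F(1)] F(2) by blast
    qed
    have G0C: "G0 face_of conv_mat A" by (rule face_of_trans[OF G0F FvF])
    have key: "A i \<notin> G0" if Pi: "0 < P i" for i
    proof
      assume Ai: "A i \<in> G0"
      obtain z' where z': "z' \<in> std_simplex" "matvec A z' = u" "(\<Sum>j\<in>UNIV. \<bar>(M j + P j) - z' j\<bar>) < 2 * t"
        using exchange[OF G0C ri Ai tp M0 sM P0 t_def[symmetric] Pi uMq] by blast
      have "(\<Sum>j\<in>UNIV. \<bar>x j - z' j\<bar>) < (\<Sum>i\<in>UNIV. \<bar>x i - z i\<bar>)"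
        using z'(3) dz by (simp add: xPM)
      then show False using zmin z'(1,2) by force
    qed
    obtain i0 where i0: "0 < P i0"
    proof -
      have "\<exists>i. 0 < P i"
      proof (rule ccontr)
        assume "\<not> (\<exists>i. 0 < P i)"
        then have h: "\<forall>i. P i \<le> 0" by (simp add: not_less)
        have "\<forall>i. P i = 0"
        proof
          fix i show "P i = 0" using h P0 by (metis order_antisym)
        qed
        then have "t = 0" unfolding t_def by simp
        then show False using tp by simp
      qed
      then show ?thesis using that by blast
    qed
    have G0ne: "G0 \<noteq> {}" using qG0 by blast
    have G0nc: "G0 \<noteq> conv_mat A" using key[OF i0] AiC[of i0] by blast
    let ?H = "convex hull (A ` {j. A j \<notin> G0})"
    have pH: "matvec A p \<in> ?H"
    proof -
      let ?J = "{j. 0 < P j}"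
      have "matvec A p = (\<Sum>j\<in>?J. p j *\<^sub>R A j)"
        unfolding matvec_def
        by (rule sum.mono_neutral_right) (auto simp: p_def P_def)
      also have "\<dots> \<in> ?H"
      proof (rule convex_sum)
        show "finite ?J" by simp
        show "convex ?H" by simp
        have "sum p ?J = sum p UNIV"
          by (rule sum.mono_neutral_left) (auto simp: p_def P_def)
        then show "sum p ?J = 1" using sp by simp
        show "\<And>i. i \<in> ?J \<Longrightarrow> 0 \<le> p i" using pS0 by blast
        show "\<And>i. i \<in> ?J \<Longrightarrow> A i \<in> ?H" using key by (intro hull_inc) blast
      qed
      finally show ?thesis .
    qed
    have Phi1: "Phi N v A \<le> dist_v N v G0 ?H" and Phi2: "0 < Phi N v A"
      using Phi_props[OF n G0F G0ne G0nc uF] by auto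
    have "dist_v N v G0 ?H \<le> normv N v (matvec A q - matvec A p)"
      by (rule dist_v_le[OF qG0 pH])
    also have "\<dots> = normv N v (matvec A p - matvec A q)"
      using normv_neg[OF n, of v "matvec A p - matvec A q"] by simp
    finally have "Phi N v A \<le> normv N v (matvec A p - matvec A q)" using Phi1 by simp
    then have "t * Phi N v A \<le> t * normv N v (matvec A p - matvec A q)" using tp by simp
    also have "\<dots> \<le> normv N v (t *\<^sub>R (matvec A p - matvec A q))"
    proof (rule normv_scale[OF n])
      show "0 \<le> t" using t0 .
      have "P i \<le> x i" for i unfolding P_def using zS'(1) xS(1) by simp
      then have "t \<le> sum x UNIV" unfolding t_def by (intro sum_mono) simp
      then show "t \<le> 1" using xS(2) by simp
    qed
    finally have "t * Phi N v A \<le> normv N v (matvec A x - u)" using Ax by simp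
    then have "2 * t \<le> 2 * normv N v (matvec A x - u) / Phi N v A"
      using Phi2 by (simp add: pos_le_divide_eq)
    then show ?thesis using L2t by simp
  qed
qed

end
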